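(* Let $\gamma$ be a non-polyhedral gauge on $\mathbb{R}^2$. Then there exist $a,b\in\mathbb{R}^2$ such that $\mathrm{EH}_\gamma(\{a,b\})$ is unbounded.
   Context: A gauge $\gamma$ on $\mathbb{R}^d$ is the Minkowski functional of a convex compact set $B_\gamma$ with the origin in its interior (not necessarily symmetric); it is polyhedral if $B_\gamma$ is a polytope. $\gamma^\circ$ is the dual gauge with unit ball $B_{\gamma^\circ}$. For $u\in B_{\gamma^\circ}$: if $\gamma^\circ(u)=1$, $N(u)=\mathbb{R}_{\ge0}F(u)$ with $F(u)=\{x\in B_\gamma:\langle u,x\rangle=1\}$; otherwise $N(u)=\{0\}$. For finite $S$ and $\pi=(u_s)_{s\in S}\subset B_{\gamma^\circ}$, $C_\pi=\bigcap_{s\in S}(s+N(u_s))$; a nonempty $C_\pi$ is an elementary convex set for $S$; the elementary hull $\mathrm{EH}_\gamma(S)$ is the union of all bounded elementary convex sets for $S$. *)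

theory Defs
  imports "HOL-Analysis.Analysis"
begin

definition minkowski_functional :: "('a::real_normed_vector) set \<Rightarrow> 'a \<Rightarrow> real" where
  "minkowski_functional B x = Inf {t. t > 0 \<and> x \<in> (\<lambda>y. t *\<^sub>R y) ` B}"

definition is_gauge :: "('a::euclidean_space \<Rightarrow> real) \<Rightarrow> bool" where
  "is_gauge \<gamma> \<longleftrightarrow> (\<exists>B. convex B \<and> compact B \<and> 0 \<in> interior B \<and> \<gamma> = minkowski_functional B)"

definition gauge_ball :: "('a::euclidean_space \<Rightarrow> real) \<Rightarrow> 'a set" where
  "gauge_ball \<gamma> = {x. \<gamma> x \<le> 1}"

definition polyhedral_gauge :: "('a::euclidean_space \<Rightarrow> real) \<Rightarrow> bool" where
  "polyhedral_gauge \<gamma> \<longleftrightarrow> polytope (gauge_ball \<gamma>)"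

definition dual_gauge :: "('a::euclidean_space \<Rightarrow> real) \<Rightarrow> 'a \<Rightarrow> real" where
  "dual_gauge \<gamma> u = Sup ((\<lambda>x. u \<bullet> x) ` gauge_ball \<gamma>)"

definition face_F :: "('a::euclidean_space \<Rightarrow> real) \<Rightarrow> 'a \<Rightarrow> 'a set" where
  "face_F \<gamma> u = {x \<in> gauge_ball \<gamma>. u \<bullet> x = 1}"

definition cone_N :: "('a::euclidean_space \<Rightarrow> real) \<Rightarrow> 'a \<Rightarrow> 'a set" where
  "cone_N \<gamma> u = (if dual_gauge \<gamma> u = 1
     then {t *\<^sub>R x | t x. t \<ge> 0 \<and> x \<in> face_F \<gamma> u} else {0})"

definition C_pi :: "('a::euclidean_space \<Rightarrow> real) \<Rightarrow> 'a set \<Rightarrow> ('a \<Rightarrow> 'a) \<Rightarrow> 'a set" where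
  "C_pi \<gamma> S \<pi> = (\<Inter>s\<in>S. (\<lambda>y. s + y) ` cone_N \<gamma> (\<pi> s))"

definition elementary_hull :: "('a::euclidean_space \<Rightarrow> real) \<Rightarrow> 'a set \<Rightarrow> 'a set" where
  "elementary_hull \<gamma> S = \<Union>{C_pi \<gamma> S \<pi> | \<pi>.
     (\<forall>s\<in>S. dual_gauge \<gamma> (\<pi> s) \<le> 1) \<and> C_pi \<gamma> S \<pi> \<noteq> {} \<and> bounded (C_pi \<gamma> S \<pi>)}"

end

theory Submission
  imports Defs
begin


definition det2 :: "real^2 \<Rightarrow> real^2 \<Rightarrow> real" where
  "det2 x y = x$1*y$2 - x$2*y$1"

lemma inner2: "(x::real^2) \<bullet> y = x$1*y$1 + x$2*y$2"
  by (simp add: inner_vec_def sum_2)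

lemma vec2_eq: "(x::real^2) = y \<longleftrightarrow> x$1 = y$1 \<and> x$2 = y$2"
  by (simp add: vec_eq_iff forall_2)

lemma det2_add_left[simp]: "det2 (x+y) z = det2 x z + det2 y z"
  and det2_add_right[simp]: "det2 z (x+y) = det2 z x + det2 z y"
  and det2_diff_left[simp]: "det2 (x-y) z = det2 x z - det2 y z"
  and det2_diff_right[simp]: "det2 z (x-y) = det2 z x - det2 z y"
  and det2_scale_left[simp]: "det2 (c *\<^sub>R x) z = c * det2 x z"
  and det2_scale_right[simp]: "det2 z (c *\<^sub>R x) = c * det2 z x"
  and det2_zero_left[simp]: "det2 0 z = 0"
  and det2_zero_right[simp]: "det2 z 0 = 0"
  and det2_self[simp]: "det2 x x = 0"
  by (simp_all add: det2_def algebra_simps)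

lemma det2_antisym: "det2 y x = - det2 x y"
  by (simp add: det2_def)

lemma det2_cramer: "det2 q q' *\<^sub>R b = det2 b q' *\<^sub>R q - det2 b q *\<^sub>R q'"
  by (simp add: vec2_eq det2_def algebra_simps)

lemma det2_decomp: "det2 e1 e2 *\<^sub>R f = det2 f e2 *\<^sub>R e1 + det2 e1 f *\<^sub>R e2"
  by (simp add: vec2_eq det2_def algebra_simps)

lemma det2_inner_id: "(p \<bullet> x) * det2 p y - (p \<bullet> y) * det2 p x = (p \<bullet> p) * det2 x y"
  by (simp add: inner2 det2_def algebra_simps)

lemma norm2_sq: "norm (x::real^2) ^ 2 = x$1^2 + x$2^2"
  using power2_norm_eq_inner[of x] inner2[of x x] by (simp add: power2_eq_square)

lemma det2_lagrange: "(det2 x y)^2 + (x \<bullet> y)^2 = (norm x * norm y)^2"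
  unfolding power_mult_distrib norm2_sq det2_def inner2
  by (simp add: power2_eq_square algebra_simps)

lemma det2_bound: "\<bar>det2 x y\<bar> \<le> norm x * norm y"
proof -
  have "(det2 x y)^2 \<le> (norm x * norm y)^2"
    using det2_lagrange[of x y] zero_le_power2[of "x \<bullet> y"] by linarith
  then show ?thesis using abs_le_square_iff[of "det2 x y" "norm x * norm y"] by simp
qed

lemma det2_zero_parallel:
  assumes "det2 x y = 0" "x \<noteq> 0"
  shows "y = ((x \<bullet> y) / (x \<bullet> x)) *\<^sub>R x"
proof -
  have xx: "x \<bullet> x \<noteq> 0" using assms by simp
  have "(x \<bullet> x) *\<^sub>R y = (x \<bullet> y) *\<^sub>R x"
    using assms(1) by (simp add: vec2_eq inner2 det2_def algebra_simps)
  then show ?thesis using xx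
    by (metis divide_inverse_commute scaleR_right.add scaleR_scaleR eq_vector_fraction_iff)
qed




lemma sorted4:
  fixes A :: "real set"
  assumes "infinite A"
  shows "\<exists>a b c d. a \<in> A \<and> b \<in> A \<and> c \<in> A \<and> d \<in> A \<and> a < b \<and> b < c \<and> c < d"
proof -
  obtain F where F: "finite F" "card F = 4" "F \<subseteq> A"
    using infinite_arbitrarily_large[OF assms] by blast
  define L where "L = sorted_list_of_set F"
  have len: "length L = 4" using F by (simp add: L_def)
  have sw: "sorted_wrt (<) L" unfolding L_def
    using F(1) by (simp add: strict_sorted_list_of_set)
  have setL: "set L = F" using F by (simp add: L_def)
  have mem: "L ! i \<in> A" if "i < 4" for i
  proof -
    have "L ! i \<in> set L" using that len by simp
    then show ?thesis using setL F(3) by blast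
  qed
  have lt: "L ! i < L ! j" if "i < j" "j < 4" for i j
    using sw that len by (simp add: sorted_wrt_iff_nth_less)
  show ?thesis
    using mem[of 0] mem[of 1] mem[of 2] mem[of 3] lt[of 0 1] lt[of 1 2] lt[of 2 3] by auto
qed

lemma extreme_ray:
  assumes ext: "e extreme_point_of B" "e' extreme_point_of B" and B0: "(0::'a::real_vector) \<in> B"
    and ee: "e' = l *\<^sub>R e" and l: "l > 0" and e0: "e \<noteq> 0"
  shows "e' = e"
proof (rule ccontr)
  assume ne: "e' \<noteq> e"
  then have l1: "l \<noteq> 1" using ee by auto
  have e'0: "e' \<noteq> 0" using ee l e0 by simp
  show False
  proof (cases "l > 1")
    case True
    have "e = (1 - 1/l) *\<^sub>R 0 + (1/l) *\<^sub>R e'" using ee l by simp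
    then have "e \<in> open_segment 0 e'" unfolding in_segment
      using True e'0 by (intro conjI exI[of _ "1/l"]) auto
    then show False using ext(1) ext(2) B0 unfolding extreme_point_of_def by blast
  next
    case False
    then have "l < 1" using l1 by simp
    have "e' = (1 - l) *\<^sub>R 0 + l *\<^sub>R e" using ee by simp
    then have "e' \<in> open_segment 0 e" unfolding in_segment
      using \<open>l < 1\<close> l e0 by (intro conjI exI[of _ l]) auto
    then show False using ext(1) ext(2) B0 unfolding extreme_point_of_def by blast
  qed
qed




lemma scale_solve:
  fixes g e :: "'a::real_vector"
  assumes "c \<noteq> 0" "c *\<^sub>R g = a *\<^sub>R e"
  shows "g = (a / c) *\<^sub>R e"
proof -
  have "g = inverse c *\<^sub>R (c *\<^sub>R g)" using assms(1) by simp
  also have "\<dots> = (a / c) *\<^sub>R e" using assms(2) by (simp add: divide_inverse mult.commute)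
  finally show ?thesis .
qed

context
  fixes B :: "(real^2) set"
  assumes cvB: "convex B" and cpB: "compact B" and intB: "0 \<in> interior B"
begin

lemma B0: "0 \<in> B" using intB interior_subset by blast

lemma supp:
  assumes "q \<noteq> 0"
  obtains c u where "c > 0" "c *\<^sub>R q \<in> B" "u \<bullet> (c *\<^sub>R q) = 1" "\<And>x. x \<in> B \<Longrightarrow> u \<bullet> x \<le> 1"
proof -
  obtain d where d: "0 < d" "(0 + d *\<^sub>R q) \<in> frontier B"
    using ray_to_frontier[OF compact_imp_bounded[OF cpB] intB assms] by blast
  define x where "x = d *\<^sub>R q"
  have xf: "x \<in> frontier B" using d by (simp add: x_def)
  have xB: "x \<in> B" using xf frontier_subset_closed compact_imp_closed[OF cpB] by blast
  have ne: "interior B \<noteq> {}" using intB by blast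
  have nri: "x \<notin> rel_interior B"
    using xf rel_interior_nonempty_interior[OF ne] by (simp add: frontier_def)
  have xc: "x \<in> closure B" using xB closure_subset by blast
  obtain a where a: "a \<noteq> 0" "\<And>y. y \<in> closure B \<Longrightarrow> a \<bullet> x \<le> a \<bullet> y"
    "\<And>y. y \<in> rel_interior B \<Longrightarrow> a \<bullet> x < a \<bullet> y"
    using supporting_hyperplane_relative_frontier[OF cvB xc nri] by metis
  define w where "w = - a"
  have w: "w \<noteq> 0" "\<And>y. y \<in> B \<Longrightarrow> w \<bullet> y \<le> w \<bullet> x"
  proof -
    show "w \<noteq> 0" using a(1) by (simp add: w_def)
    fix y assume "y \<in> B"
    then have "y \<in> closure B" using closure_subset by blast
    then show "w \<bullet> y \<le> w \<bullet> x" using a(2) by (simp add: w_def)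
  qed
  obtain e where e: "e > 0" "ball 0 e \<subseteq> B" using intB mem_interior by blast
  define z where "z = (e / (2 * norm w)) *\<^sub>R w"
  have "z \<in> ball 0 e" using e w by (simp add: z_def)
  then have "w \<bullet> z \<le> w \<bullet> x" using e w by blast
  moreover have "w \<bullet> z > 0" using e w by (simp add: z_def)
  ultimately have wx: "w \<bullet> x > 0" by simp
  show ?thesis
  proof (rule that[of d "(1 / (w \<bullet> x)) *\<^sub>R w"])
    show "0 < d" by (rule d)
    show "d *\<^sub>R q \<in> B" using xB x_def by simp
    show "(1 / (w \<bullet> x)) *\<^sub>R w \<bullet> (d *\<^sub>R q) = 1" using wx by (simp add: x_def[symmetric])
    fix y assume "y \<in> B"
    then show "(1 / (w \<bullet> x)) *\<^sub>R w \<bullet> y \<le> 1" using w wx by (simp add: divide_le_eq_1)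
  qed
qed

lemma hit:
  assumes ext: "e extreme_point_of B"
    and u: "\<And>x. x \<in> B \<Longrightarrow> u \<bullet> x \<le> 1"
    and qf: "qh \<in> B" "f \<in> B" "u \<bullet> qh = 1" "u \<bullet> f = 1"
    and tau: "0 < \<tau>" "\<tau> < 1"
    and g: "(1 - \<tau>) *\<^sub>R qh + \<tau> *\<^sub>R f = \<mu> *\<^sub>R e" "\<mu> \<ge> 0"
    and ne: "e \<noteq> qh" "e \<noteq> f"
  shows False
proof -
  define g where "g = (1 - \<tau>) *\<^sub>R qh + \<tau> *\<^sub>R f"
  have ug: "u \<bullet> g = 1" using qf by (simp add: g_def algebra_simps)
  have gB: "g \<in> B" using convexD[OF cvB qf(1,2), of "1-\<tau>" \<tau>] tau by (simp add: g_def)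
  have eB: "e \<in> B" using ext extreme_point_of_def by blast
  have ue: "\<mu> * (u \<bullet> e) = 1" using ug g by (simp add: g_def)
  have "u \<bullet> e \<le> 1" using u eB by blast
  then have "\<mu> * (u \<bullet> e) \<le> \<mu> * 1" using g(2) by (rule mult_left_mono)
  then have mu1: "\<mu> \<ge> 1" using ue by simp
  show False
  proof (cases "\<mu> = 1")
    case True
    then have eg: "e = g" using g by (simp add: g_def)
    have "qh \<noteq> f"
    proof
      assume "qh = f"
      then have "g = qh" by (simp add: g_def flip: scaleR_add_left)
      then show False using ne eg by simp
    qed
    then have "e \<in> open_segment qh f" unfolding in_segment
      using eg tau g_def by blast
    then show False using ext qf(1,2) unfolding extreme_point_of_def by blast
  next
    case False
    then have m: "\<mu> > 1" using mu1 by simp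
    have e0: "e \<noteq> 0" using ue by auto
    have ge: "g = \<mu> *\<^sub>R e" using g by (simp add: g_def)
    have g0: "0 \<noteq> g" using ge e0 m by simp
    have "e = (1 - 1/\<mu>) *\<^sub>R 0 + (1/\<mu>) *\<^sub>R g" using ge m by simp
    then have "e \<in> open_segment 0 g" unfolding in_segment
      using m g0 by (intro conjI exI[of _ "1/\<mu>"]) auto
    then show False using ext gB B0 extreme_point_of_def by blast
  qed
qed

lemma contain:
  assumes e1: "e1 extreme_point_of B" and e2: "e2 extreme_point_of B"
    and d12: "det2 e1 e2 > 0"
    and u: "\<And>x. x \<in> B \<Longrightarrow> u \<bullet> x \<le> 1"
    and c: "c > 0" "c *\<^sub>R (e1 + e2) \<in> B" "u \<bullet> (c *\<^sub>R (e1 + e2)) = 1"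
    and f: "f \<in> B" "u \<bullet> f = 1"
  shows "det2 f e2 \<ge> 0 \<and> det2 e1 f \<ge> 0"
proof (rule ccontr)
  assume neg: "\<not> ?thesis"
  define qh where "qh = c *\<^sub>R (e1 + e2)"
  define D1 where "D1 = det2 e1 qh"
  define D2 where "D2 = det2 qh e2"
  define A1 where "A1 = det2 e1 f"
  define A2 where "A2 = det2 f e2"
  have D1: "D1 > 0" using c d12 by (simp add: D1_def qh_def)
  have D2: "D2 > 0" using c d12 by (simp add: D2_def qh_def)
  have qhB: "qh \<in> B" "u \<bullet> qh = 1" using c by (auto simp: qh_def)
  have cross2: False if t: "0 < \<tau>" "\<tau> < 1" "(1-\<tau>)*D2 + \<tau>*A2 = 0" "(1-\<tau>)*D1 + \<tau>*A1 \<ge> 0" "A2 \<noteq> 0" for \<tau>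
  proof -
    define g where "g = (1 - \<tau>) *\<^sub>R qh + \<tau> *\<^sub>R f"
    have "det2 e1 e2 *\<^sub>R g = det2 g e2 *\<^sub>R e1 + det2 e1 g *\<^sub>R e2" by (rule det2_decomp)
    moreover have "det2 g e2 = 0" using t by (simp add: g_def D2_def A2_def)
    moreover have "det2 e1 g \<ge> 0" using t by (simp add: g_def D1_def A1_def)
    ultimately have "g = (det2 e1 g / det2 e1 e2) *\<^sub>R e2" "det2 e1 g / det2 e1 e2 \<ge> 0"
      using d12 by (auto intro!: scale_solve)
    moreover have "e2 \<noteq> qh" using D2 D2_def by auto
    moreover have "e2 \<noteq> f" using t A2_def by auto
    ultimately show False
      using hit[OF e2 u qhB(1) f(1) qhB(2) f(2) t(1,2), folded g_def] by blast
  qed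
  have cross1: False if t: "0 < \<tau>" "\<tau> < 1" "(1-\<tau>)*D1 + \<tau>*A1 = 0" "(1-\<tau>)*D2 + \<tau>*A2 \<ge> 0" "A1 \<noteq> 0" for \<tau>
  proof -
    define g where "g = (1 - \<tau>) *\<^sub>R qh + \<tau> *\<^sub>R f"
    have "det2 e1 e2 *\<^sub>R g = det2 g e2 *\<^sub>R e1 + det2 e1 g *\<^sub>R e2" by (rule det2_decomp)
    moreover have "det2 e1 g = 0" using t by (simp add: g_def D1_def A1_def)
    moreover have "det2 g e2 \<ge> 0" using t by (simp add: g_def D2_def A2_def)
    ultimately have "g = (det2 g e2 / det2 e1 e2) *\<^sub>R e1" "det2 g e2 / det2 e1 e2 \<ge> 0"
      using d12 by (auto intro!: scale_solve)
    moreover have "e1 \<noteq> qh" using D1 D1_def by auto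
    moreover have "e1 \<noteq> f" using t A1_def by auto
    ultimately show False
      using hit[OF e1 u qhB(1) f(1) qhB(2) f(2) t(1,2), folded g_def] by blast
  qed
  have neg': "A2 < 0 \<or> A1 < 0" using neg by (auto simp: A1_def A2_def)
  define t1 where "t1 = D1 / (D1 - A1)"
  define t2 where "t2 = D2 / (D2 - A2)"
  show False
  proof (cases "A2 < 0")
    case True
    have t2: "0 < t2" "t2 < 1" "(1-t2)*D2 + t2*A2 = 0"
      using True D2 by (auto simp: t2_def field_simps)
    show False
    proof (cases "(1-t2)*D1 + t2*A1 \<ge> 0")
      case True
      then show False using cross2[OF t2] \<open>A2 < 0\<close> by simp
    next
      case False
      have A1: "A1 < 0"
      proof (rule ccontr)
        assume "\<not> A1 < 0"
        then show False
          using mult_nonneg_nonneg[of "1-t2" D1] mult_nonneg_nonneg[of t2 A1] t2 D1 False by linarith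
      qed
      have t1: "0 < t1" "t1 < 1" "(1-t1)*D1 + t1*A1 = 0"
        using A1 D1 by (auto simp: t1_def field_simps)
      have "t1 < t2"
      proof (rule ccontr)
        assume "\<not> t1 < t2"
        then have "t2 \<le> t1" by simp
        have "(1-t2)*D1 + t2*A1 \<ge> (1-t1)*D1 + t1*A1"
        proof -
          have "(t1 - t2) * (A1 - D1) \<le> 0"
            using \<open>t2 \<le> t1\<close> A1 D1 by (intro mult_nonneg_nonpos) auto
          then show ?thesis by (simp add: algebra_simps)
        qed
        then show False using False t1 by simp
      qed
      have "(1-t1)*D2 + t1*A2 \<ge> 0"
      proof -
        have "(1-t1)*D2 + t1*A2 \<ge> (1-t2)*D2 + t2*A2"
        proof -
          have "(t2 - t1) * (A2 - D2) \<le> 0"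
            using \<open>t1 < t2\<close> True D2 by (intro mult_nonneg_nonpos) auto
          then show ?thesis by (simp add: algebra_simps)
        qed
        then show ?thesis using t2 by simp
      qed
      then show False using cross1[OF t1] A1 by simp
    qed
  next
    case False
    then have A1: "A1 < 0" and A2: "A2 \<ge> 0" using neg' by auto
    have t1: "0 < t1" "t1 < 1" "(1-t1)*D1 + t1*A1 = 0"
      using A1 D1 by (auto simp: t1_def field_simps)
    have "(1-t1)*D2 + t1*A2 \<ge> 0" using t1 D2 A2 by simp
    then show False using cross1[OF t1] A1 by simp
  qed
qed

end



lemma theta_order:
  fixes p x y :: "real^2"
  assumes px: "p \<bullet> x > 0" and py: "p \<bullet> y > 0" and p0: "p \<noteq> 0"
    and lt: "det2 p x / (p \<bullet> x) < det2 p y / (p \<bullet> y)"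
  shows "det2 x y > 0"
proof -
  have "det2 p x * (p \<bullet> y) < det2 p y * (p \<bullet> x)"
    using lt px py by (simp add: divide_less_eq less_divide_eq field_simps)
  then have "(p \<bullet> p) * det2 x y > 0" using det2_inner_id[of p x y] by (simp add: algebra_simps)
  moreover have "p \<bullet> p > 0" using p0 by simp
  ultimately show ?thesis by (simp add: zero_less_mult_iff)
qed

lemma theta_inj:
  fixes p x y :: "real^2"
  assumes px: "p \<bullet> x > 0" and py: "p \<bullet> y > 0" and p0: "p \<noteq> 0"
    and eq: "det2 p x / (p \<bullet> x) = det2 p y / (p \<bullet> y)"
  shows "det2 x y = 0" and "y = ((p \<bullet> y) / (p \<bullet> x)) *\<^sub>R x"
proof -
  have "det2 p x * (p \<bullet> y) = det2 p y * (p \<bullet> x)"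
    using eq px py by (simp add: field_simps)
  then have "(p \<bullet> p) * det2 x y = 0" using det2_inner_id[of p x y] by (simp add: algebra_simps)
  moreover have "p \<bullet> p > 0" using p0 by simp
  ultimately show d0: "det2 x y = 0" by simp
  have x0: "x \<noteq> 0" using px by auto
  have y: "y = ((x \<bullet> y) / (x \<bullet> x)) *\<^sub>R x" by (rule det2_zero_parallel[OF d0 x0])
  then have "p \<bullet> y = ((x \<bullet> y) / (x \<bullet> x)) * (p \<bullet> x)"
    by (metis inner_scaleR_right)
  then have "(x \<bullet> y) / (x \<bullet> x) = (p \<bullet> y) / (p \<bullet> x)" using px by (simp add: field_simps)
  then show "y = ((p \<bullet> y) / (p \<bullet> x)) *\<^sub>R x" using y by simp
qed




lemma gauge_ball_eq:
  fixes B :: "'a::euclidean_space set"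
  assumes cv: "convex B" and cp: "compact B" and i0: "0 \<in> interior B"
  shows "gauge_ball (minkowski_functional B) = B"
proof (intro set_eqI iffI)
  have B0: "0 \<in> B" using i0 interior_subset by blast
  have bdd: "bdd_below {t. t > 0 \<and> x \<in> (\<lambda>y. t *\<^sub>R y) ` B}" for x :: 'a
    by (rule bdd_belowI[of _ 0]) auto
  fix x
  {
    assume "x \<in> B"
    then have "1 \<in> {t. t > 0 \<and> x \<in> (\<lambda>y. t *\<^sub>R y) ` B}" by force
    then show "x \<in> gauge_ball (minkowski_functional B)"
      unfolding gauge_ball_def minkowski_functional_def
      using cInf_lower[OF _ bdd] by auto
  }
  assume "x \<in> gauge_ball (minkowski_functional B)"
  then have le: "Inf {t. t > 0 \<and> x \<in> (\<lambda>y. t *\<^sub>R y) ` B} \<le> 1"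
    unfolding gauge_ball_def minkowski_functional_def by auto
  show "x \<in> B"
  proof (cases "x = 0")
    case True then show ?thesis using B0 by simp
  next
    case False
    obtain e where e: "e > 0" "ball 0 e \<subseteq> B"
      using i0 mem_interior by blast
    define t0 where "t0 = 2 * norm x / e"
    have t0: "t0 > 0" using False e by (simp add: t0_def)
    have "(inverse t0) *\<^sub>R x \<in> ball 0 e"
      using False e by (simp add: t0_def)
    then have "(inverse t0) *\<^sub>R x \<in> B" using e by blast
    then have "x = t0 *\<^sub>R ((inverse t0) *\<^sub>R x)" "t0 > 0" using t0 by auto
    then have ne: "{t. t > 0 \<and> x \<in> (\<lambda>y. t *\<^sub>R y) ` B} \<noteq> {}"
      using \<open>(inverse t0) *\<^sub>R x \<in> B\<close> by blast
    have key: "inverse t' *\<^sub>R x \<in> B" if tl: "t' > Inf {t. t > 0 \<and> x \<in> (\<lambda>y. t *\<^sub>R y) ` B}" for t'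
    proof -
      obtain t where t: "t > 0" "x \<in> (\<lambda>y. t *\<^sub>R y) ` B" "t < t'"
        using tl cInf_less_iff[OF ne bdd] by auto
      then obtain y where y: "y \<in> B" "x = t *\<^sub>R y" by auto
      have tt: "0 \<le> t / t'" "t / t' \<le> 1" using t by auto
      have "(t / t') *\<^sub>R y + (1 - t / t') *\<^sub>R 0 \<in> B"
        using convexD[OF cv y(1) B0 tt(1), of "1 - t/t'"] tt by simp
      moreover have "inverse t' *\<^sub>R x = (t / t') *\<^sub>R y" using y t
        by (simp add: divide_inverse_commute)
      ultimately show ?thesis by simp
    qed
    have mem: "inverse (1 + inverse (real (Suc n))) *\<^sub>R x \<in> B" for n
      by (rule key) (use le in \<open>smt (verit) inverse_positive_iff_positive of_nat_0_less_iff zero_less_Suc\<close>)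
    have lim: "(\<lambda>n. inverse (1 + inverse (real (Suc n))) *\<^sub>R x) \<longlonglongrightarrow> inverse (1 + 0) *\<^sub>R x"
      by (intro tendsto_intros LIMSEQ_inverse_real_of_nat) auto
    show ?thesis
      using closed_sequentially[OF compact_imp_closed[OF cp] _ lim] mem by simp
  qed
qed




context
  fixes B :: "(real^2) set" and \<gamma> :: "real^2 \<Rightarrow> real"
  assumes cvB: "convex B" and cpB: "compact B" and intB: "0 \<in> interior B"
    and gb: "gauge_ball \<gamma> = B"
begin

lemma dual_one:
  assumes "\<And>x. x \<in> B \<Longrightarrow> u \<bullet> x \<le> 1" "x0 \<in> B" "u \<bullet> x0 = 1"
  shows "dual_gauge \<gamma> u = 1"
  unfolding dual_gauge_def gb
  by (rule cSup_eq_maximum) (use assms in auto)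

lemma cone_eq:
  assumes "dual_gauge \<gamma> u = 1"
  shows "cone_N \<gamma> u = {t *\<^sub>R x | t x. t \<ge> 0 \<and> x \<in> B \<and> u \<bullet> x = 1}"
  using assms unfolding cone_N_def face_F_def gb by auto

lemma extreme_norm:
  assumes "ball 0 r \<subseteq> B" "e extreme_point_of B"
  shows "norm e \<ge> r"
proof (rule ccontr)
  assume "\<not> norm e \<ge> r"
  then have "e \<in> ball 0 r" by simp
  then have "e \<in> interior B" using assms(1) interior_maximal open_ball by blast
  then show False using extreme_point_not_in_interior[OF assms(2)] by blast
qed

lemma main_unbounded:
  assumes np: "\<not> polytope B"
  shows "\<exists>b. \<not> bounded (elementary_hull \<gamma> {0, b})"
proof -
  define E where "E = {x. x extreme_point_of B}"
  have EB: "E \<subseteq> B" unfolding E_def extreme_point_of_def by blast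
  have infE: "infinite E"
  proof
    assume "finite E"
    then have "polytope B" unfolding polytope_def E_def
      using Krein_Milman_Minkowski[OF cpB cvB] by blast
    then show False using np by simp
  qed
  obtain p where pB: "p \<in> B" and plim: "p islimpt E"
    using Heine_Borel_imp_Bolzano_Weierstrass[OF cpB infE EB] by blast
  obtain r where r: "r > 0" "ball 0 r \<subseteq> B" using intB mem_interior by blast
  have Enorm: "norm e \<ge> r" if "e \<in> E" for e
    using extreme_norm[OF r(2)] that by (simp add: E_def)
  obtain e0 where e0: "e0 \<in> E" "dist e0 p < r / 2"
    using plim r(1) unfolding islimpt_approachable by (metis half_gt_zero)
  have "norm p \<ge> r / 2"
  proof -
    have "norm e0 \<le> norm p + dist e0 p" by (metis dist_norm norm_triangle_sub add.commute)
    then show ?thesis using Enorm[OF e0(1)] e0(2) by simp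
  qed
  define P where "P = norm p"
  have P: "P > 0" unfolding P_def using \<open>norm p \<ge> r/2\<close> r(1) by linarith
  have p0: "p \<noteq> 0" using P by (auto simp: P_def)
  have pp: "p \<bullet> p = P^2" by (simp add: P_def power2_norm_eq_inner)
  define b :: "real^2" where "b = vector [p$2, -(p$1)]"
  have b1: "b$1 = p$2" and b2: "b$2 = -(p$1)" by (simp_all add: b_def)
  have dbp: "det2 b p = P^2"
    using norm2_sq[of p] by (simp add: det2_def b1 b2 P_def power2_eq_square)
  have nb: "norm b = P"
  proof -
    have "norm b ^ 2 = P ^ 2" using norm2_sq[of p] norm2_sq[of b] by (simp add: b1 b2 P_def)
    then show ?thesis using P by (simp add: power2_eq_iff_nonneg)
  qed
  have b0: "b \<noteq> 0" using nb P by auto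
  obtain R where R: "\<And>x. x \<in> B \<Longrightarrow> norm x \<le> R"
    using compact_imp_bounded[OF cpB] unfolding bounded_iff by blast
  show ?thesis
  proof (rule exI[of _ b], rule notI)
    assume bd: "bounded (elementary_hull \<gamma> {0, b})"
    then obtain M0 where M0: "\<And>x. x \<in> elementary_hull \<gamma> {0, b} \<Longrightarrow> norm x \<le> M0"
      unfolding bounded_iff by blast
    define M where "M = max M0 1"
    have M: "M > 0" "\<And>x. x \<in> elementary_hull \<gamma> {0, b} \<Longrightarrow> norm x \<le> M"
      using M0 unfolding M_def by (force, meson max.coboundedI1)
    define \<epsilon> where "\<epsilon> = min (P/4) (P^2 / (12 * (M + 1)))"
    have \<epsilon>: "\<epsilon> > 0" "\<epsilon> \<le> P/4" "\<epsilon> \<le> P^2 / (12 * (M + 1))"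
    proof -
      have "P^2 / (12 * (M + 1)) > 0" using P M by simp
      then show "\<epsilon> > 0" using P by (simp add: \<epsilon>_def)
      show "\<epsilon> \<le> P/4" unfolding \<epsilon>_def by (rule min.cobounded1)
      show "\<epsilon> \<le> P^2 / (12 * (M + 1))" unfolding \<epsilon>_def by (rule min.cobounded2)
    qed
    define T where "T = E \<inter> ball p \<epsilon>"
    have infT: "infinite T" using plim \<epsilon>(1) unfolding islimpt_eq_infinite_ball T_def by blast
    have Tclose: "norm (x - p) < \<epsilon>" if "x \<in> T" for x
      using that by (simp add: T_def dist_norm norm_minus_commute)
    have Tpos: "p \<bullet> x > 0" if "x \<in> T" for x
    proof -
      have "\<bar>p \<bullet> (x - p)\<bar> \<le> P * norm (x - p)" using Cauchy_Schwarz_ineq2[of p "x - p"] by (simp add: P_def)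
      also have "\<dots> \<le> P * \<epsilon>" using Tclose[OF that] P by (simp add: less_imp_le)
      also have "\<dots> < P * P" using \<epsilon>(2) P by simp
      finally have "\<bar>p \<bullet> (x - p)\<bar> < P * P" .
      moreover have "p \<bullet> x = P * P + p \<bullet> (x - p)" using pp by (simp add: inner_diff_right power2_eq_square)
      ultimately show ?thesis by linarith
    qed
    define \<theta> where "\<theta> x = det2 p x / (p \<bullet> x)" for x
    have injT: "inj_on \<theta> T"
    proof (rule inj_onI)
      fix x y assume xT: "x \<in> T" and yT: "y \<in> T" and eq: "\<theta> x = \<theta> y"
      have yx: "y = ((p \<bullet> y) / (p \<bullet> x)) *\<^sub>R x"
        using theta_inj(2)[OF Tpos[OF xT] Tpos[OF yT] p0] eq by (simp add: \<theta>_def)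
      have xE: "x extreme_point_of B" "y extreme_point_of B" using xT yT by (auto simp: T_def E_def)
      have "x \<noteq> 0" using Enorm[of x] xT r(1) by (auto simp: T_def)
      moreover have "(p \<bullet> y) / (p \<bullet> x) > 0" using Tpos[OF xT] Tpos[OF yT] by simp
      ultimately show "x = y"
        using extreme_ray[OF xE(1) xE(2) B0[OF cvB cpB intB] yx] by simp
    qed
    have "infinite (\<theta> ` T)" using infT injT finite_imageD by blast
    then obtain a1 a2 a3 a4 where a: "a1 \<in> \<theta> ` T" "a2 \<in> \<theta> ` T" "a3 \<in> \<theta> ` T" "a4 \<in> \<theta> ` T"
      "a1 < a2" "a2 < a3" "a3 < a4"
      using sorted4[OF \<open>infinite (\<theta> ` T)\<close>] by blast
    obtain e1 where e1: "e1 \<in> T" "a1 = \<theta> e1" using a(1) by blast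
    obtain e2 where e2: "e2 \<in> T" "a2 = \<theta> e2" using a(2) by blast
    obtain e3 where e3: "e3 \<in> T" "a3 = \<theta> e3" using a(3) by blast
    obtain e4 where e4: "e4 \<in> T" "a4 = \<theta> e4" using a(4) by blast
    have eT: "e1 \<in> T" "e2 \<in> T" "e3 \<in> T" "e4 \<in> T" using e1 e2 e3 e4 by simp_all
    have th: "\<theta> e1 < \<theta> e2" "\<theta> e2 < \<theta> e3" "\<theta> e3 < \<theta> e4"
      using a(5,6,7) e1 e2 e3 e4 by simp_all
    have ord: "det2 x y > 0" if "x \<in> T" "y \<in> T" "\<theta> x < \<theta> y" for x y
      using theta_order[OF Tpos[OF that(1)] Tpos[OF that(2)] p0] that(3) by (simp add: \<theta>_def)
    have d12: "det2 e1 e2 > 0" using ord[OF eT(1) eT(2)] th by simp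
    have d13: "det2 e1 e3 > 0" using ord[OF eT(1) eT(3)] th by simp
    have d14: "det2 e1 e4 > 0" using ord[OF eT(1) eT(4)] th by simp
    have d23: "det2 e2 e3 > 0" using ord[OF eT(2) eT(3)] th by simp
    have d24: "det2 e2 e4 > 0" using ord[OF eT(2) eT(4)] th by simp
    have d34: "det2 e3 e4 > 0" using ord[OF eT(3) eT(4)] th by simp
    have eE: "e1 extreme_point_of B" "e2 extreme_point_of B" "e3 extreme_point_of B" "e4 extreme_point_of B"
      using eT by (auto simp: T_def E_def)
    have eB: "e1 \<in> B" "e2 \<in> B" "e3 \<in> B" "e4 \<in> B" using eE extreme_point_of_def by auto
    define q where "q = e1 + e2"
    define q' where "q' = e3 + e4"
    define D where "D = det2 q q'"
    have D: "D > 0" using d13 d14 d23 d24 by (simp add: D_def q_def q'_def)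
    have q0: "q \<noteq> 0" and q'0: "q' \<noteq> 0" using D by (auto simp: D_def)
    obtain c u where cu: "c > 0" "c *\<^sub>R q \<in> B" "u \<bullet> (c *\<^sub>R q) = 1" "\<And>x. x \<in> B \<Longrightarrow> u \<bullet> x \<le> 1"
      using supp[OF cvB cpB intB q0] by blast
    obtain c' v where cv: "c' > 0" "c' *\<^sub>R q' \<in> B" "v \<bullet> (c' *\<^sub>R q') = 1" "\<And>x. x \<in> B \<Longrightarrow> v \<bullet> x \<le> 1"
      using supp[OF cvB cpB intB q'0] by blast
    have du: "dual_gauge \<gamma> u = 1" by (rule dual_one[OF cu(4) cu(2) cu(3)])
    have dv: "dual_gauge \<gamma> v = 1" by (rule dual_one[OF cv(4) cv(2) cv(3)])
    have Nu: "cone_N \<gamma> u = {t *\<^sub>R x | t x. t \<ge> 0 \<and> x \<in> B \<and> u \<bullet> x = 1}" by (rule cone_eq[OF du])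
    have Nv: "cone_N \<gamma> v = {t *\<^sub>R x | t x. t \<ge> 0 \<and> x \<in> B \<and> v \<bullet> x = 1}" by (rule cone_eq[OF dv])
    have contU: "det2 f e2 \<ge> 0 \<and> det2 e1 f \<ge> 0" if "f \<in> B" "u \<bullet> f = 1" for f
      using contain[OF cvB cpB intB eE(1) eE(2) d12 cu(4) cu(1)] cu(2,3) that by (simp add: q_def)
    have contV: "det2 g e4 \<ge> 0 \<and> det2 e3 g \<ge> 0" if "g \<in> B" "v \<bullet> g = 1" for g
      using contain[OF cvB cpB intB eE(3) eE(4) d34 cv(4) cv(1)] cv(2,3) that by (simp add: q'_def)
    define \<pi> where "\<pi> s = (if s = 0 then u else v)" for s :: "real^2"
    define C where "C = C_pi \<gamma> {0, b} \<pi>"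
    have Ceq: "C = ((\<lambda>y. 0 + y) ` cone_N \<gamma> u) \<inter> ((\<lambda>y. b + y) ` cone_N \<gamma> v)"
      using b0 by (simp add: C_def C_pi_def \<pi>_def)
    define m where "m = min (det2 e1 e3) (det2 e2 e3)"
    have m: "m > 0" using d13 d23 by (simp add: m_def)
    have Cbd: "norm z \<le> (\<bar>det2 b e3\<bar> / m) * R" if "z \<in> C" for z
    proof -
      from that obtain \<tau> f where f: "\<tau> \<ge> 0" "f \<in> B" "u \<bullet> f = 1" "z = \<tau> *\<^sub>R f"
        unfolding Ceq Nu by auto
      from that obtain \<sigma> g where g: "\<sigma> \<ge> 0" "g \<in> B" "v \<bullet> g = 1" "z = b + \<sigma> *\<^sub>R g"
        unfolding Ceq Nv by auto
      have cf: "det2 f e2 \<ge> 0" "det2 e1 f \<ge> 0" using contU[OF f(2,3)] by auto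
      have cg: "det2 g e4 \<ge> 0" "det2 e3 g \<ge> 0" using contV[OF g(2,3)] by auto
      have dec: "det2 e1 e2 *\<^sub>R f = det2 f e2 *\<^sub>R e1 + det2 e1 f *\<^sub>R e2" by (rule det2_decomp)
      have "det2 e1 e2 = u \<bullet> (det2 e1 e2 *\<^sub>R f)" using f(3) by simp
      also have "\<dots> = det2 f e2 * (u \<bullet> e1) + det2 e1 f * (u \<bullet> e2)"
        unfolding dec by (simp add: inner_add_right)
      also have "\<dots> \<le> det2 f e2 * 1 + det2 e1 f * 1"
        using cf cu(4)[OF eB(1)] cu(4)[OF eB(2)] by (intro add_mono mult_left_mono) auto
      finally have s12: "det2 e1 e2 \<le> det2 f e2 + det2 e1 f" by simp
      have "det2 e1 e2 * det2 f e3 = det2 (det2 e1 e2 *\<^sub>R f) e3" by simp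
      also have "\<dots> = det2 f e2 * det2 e1 e3 + det2 e1 f * det2 e2 e3"
        unfolding dec by simp
      also have "\<dots> \<ge> det2 f e2 * m + det2 e1 f * m"
        using cf by (intro add_mono mult_left_mono) (auto simp: m_def)
      finally have "det2 e1 e2 * det2 f e3 \<ge> (det2 f e2 + det2 e1 f) * m" by (simp add: algebra_simps)
      moreover have "(det2 f e2 + det2 e1 f) * m \<ge> det2 e1 e2 * m"
        using s12 m by (simp add: mult_right_mono)
      ultimately have "det2 e1 e2 * det2 f e3 \<ge> det2 e1 e2 * m" by simp
      then have fe3: "det2 f e3 \<ge> m" using d12 by simp
      have decg: "det2 e3 e4 *\<^sub>R g = det2 g e4 *\<^sub>R e3 + det2 e3 g *\<^sub>R e4" by (rule det2_decomp)
      have "det2 e3 e4 * det2 g e3 = det2 (det2 e3 e4 *\<^sub>R g) e3" by simp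
      also have "\<dots> = - (det2 e3 g * det2 e3 e4)" unfolding decg by (simp add: det2_antisym[of e4 e3])
      finally have "det2 e3 e4 * det2 g e3 \<le> 0" using cg d34 by simp
      then have ge3: "det2 g e3 \<le> 0" using d34 by (simp add: mult_le_0_iff)
      have "\<tau> * m \<le> \<tau> * det2 f e3" using fe3 f(1) by (simp add: mult_left_mono)
      also have "\<dots> = det2 z e3" using f(4) by simp
      also have "\<dots> = det2 b e3 + \<sigma> * det2 g e3" using g(4) by simp
      also have "\<dots> \<le> det2 b e3" using g(1) ge3 by (simp add: mult_nonneg_nonpos)
      finally have "\<tau> * m \<le> \<bar>det2 b e3\<bar>" by simp
      then have tau: "\<tau> \<le> \<bar>det2 b e3\<bar> / m" using m by (simp add: le_divide_eq)
      have "norm z = \<tau> * norm f" using f(1,4) by simp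
      also have "\<dots> \<le> (\<bar>det2 b e3\<bar> / m) * R"
        using tau R[OF f(2)] f(1) by (intro mult_mono) auto
      finally show ?thesis .
    qed
    have Cbounded: "bounded C" unfolding bounded_iff using Cbd by blast
    define t where "t = det2 b q' / D"
    define s where "s = det2 b q / D"
    define y where "y = t *\<^sub>R q"
    have cr: "D *\<^sub>R b = det2 b q' *\<^sub>R q - det2 b q *\<^sub>R q'" unfolding D_def by (rule det2_cramer)
    have bts: "b = t *\<^sub>R q - s *\<^sub>R q'"
    proof -
      have "b = inverse D *\<^sub>R (D *\<^sub>R b)" using D by simp
      also have "\<dots> = t *\<^sub>R q - s *\<^sub>R q'" unfolding cr using D
        by (simp add: t_def s_def scaleR_diff_right divide_inverse mult.commute)
      finally show ?thesis .
    qed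
    have n1: "norm (e1 - p) < \<epsilon>" "norm (e2 - p) < \<epsilon>" "norm (e3 - p) < \<epsilon>" "norm (e4 - p) < \<epsilon>"
      using Tclose eT by auto
    have nq: "norm (q - 2 *\<^sub>R p) < 2 * \<epsilon>"
    proof -
      have "q - 2 *\<^sub>R p = (e1 - p) + (e2 - p)" by (simp add: q_def scaleR_2 algebra_simps)
      then have "norm (q - 2 *\<^sub>R p) \<le> norm (e1 - p) + norm (e2 - p)" by (metis norm_triangle_ineq)
      then show ?thesis using n1 by simp
    qed
    have nq': "norm (q' - 2 *\<^sub>R p) < 2 * \<epsilon>"
    proof -
      have "q' - 2 *\<^sub>R p = (e3 - p) + (e4 - p)" by (simp add: q'_def scaleR_2 algebra_simps)
      then have "norm (q' - 2 *\<^sub>R p) \<le> norm (e3 - p) + norm (e4 - p)" by (metis norm_triangle_ineq)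
      then show ?thesis using n1 by simp
    qed
    have detb: "det2 b w \<ge> P^2" if "norm (w - 2 *\<^sub>R p) < 2 * \<epsilon>" for w
    proof -
      have "det2 b w = det2 b (2 *\<^sub>R p) + det2 b (w - 2 *\<^sub>R p)" by simp
      also have "det2 b (2 *\<^sub>R p) = 2 * P^2" using dbp by simp
      finally have eq: "det2 b w = 2 * P^2 + det2 b (w - 2 *\<^sub>R p)" .
      have "\<bar>det2 b (w - 2 *\<^sub>R p)\<bar> \<le> P * norm (w - 2 *\<^sub>R p)" using det2_bound[of b "w - 2 *\<^sub>R p"] nb by (simp only:)
      also have "\<dots> \<le> P * (2 * \<epsilon>)" using that P by (simp add: less_imp_le)
      also have "\<dots> \<le> P * (P / 2)" using \<epsilon>(2) P by simp
      finally have "\<bar>det2 b (w - 2 *\<^sub>R p)\<bar> \<le> P^2 / 2" by (simp add: power2_eq_square)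
      moreover have "P^2 / 2 \<le> P^2 - P^2/2" by simp
      ultimately show ?thesis using eq abs_ge_minus_self[of "det2 b (w - 2 *\<^sub>R p)"] by linarith
    qed
    have Nbq': "det2 b q' \<ge> P^2" by (rule detb[OF nq'])
    have Nbq: "det2 b q \<ge> P^2" by (rule detb[OF nq])
    have normq': "norm q' \<le> 3 * P"
    proof -
      have "norm q' \<le> norm (2 *\<^sub>R p) + norm (q' - 2 *\<^sub>R p)" by (metis norm_triangle_sub)
      moreover have "norm (2 *\<^sub>R p) = 2 * P" by (simp add: P_def)
      ultimately show ?thesis using nq' \<epsilon>(2) P by linarith
    qed
    have normq: "norm q \<ge> P"
    proof -
      have "norm (2 *\<^sub>R p) \<le> norm q + norm (q - 2 *\<^sub>R p)" by (metis norm_triangle_sub add.commute norm_minus_commute)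
      moreover have "norm (2 *\<^sub>R p) = 2 * P" by (simp add: P_def)
      ultimately show ?thesis using nq \<epsilon>(2) P by linarith
    qed
    have Dle: "D \<le> 12 * P * \<epsilon>"
    proof -
      have "D = det2 (q - q') q'" by (simp add: D_def)
      also have "\<dots> \<le> norm (q - q') * norm q'" using det2_bound[of "q - q'" q'] by simp
      also have "\<dots> \<le> (4 * \<epsilon>) * (3 * P)"
      proof (rule mult_mono)
        have "q - q' = (q - 2 *\<^sub>R p) - (q' - 2 *\<^sub>R p)" by simp
        then have "norm (q - q') \<le> norm (q - 2 *\<^sub>R p) + norm (q' - 2 *\<^sub>R p)" by (metis norm_triangle_ineq4)
        then show "norm (q - q') \<le> 4 * \<epsilon>" using nq nq' by simp
      qed (use normq' \<epsilon> in auto)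
      finally show ?thesis by (simp add: algebra_simps)
    qed
    have tpos: "t \<ge> P^2 / (12 * P * \<epsilon>)" unfolding t_def
      by (rule frac_le) (use Nbq' D Dle P zero_le_power2[of P] in linarith)+
    have "det2 b q \<ge> 0" using Nbq zero_le_power2[of P] by linarith
    then have spos: "s \<ge> 0" unfolding s_def using D by simp
    have "P^2 / (12 * P * \<epsilon>) \<ge> 0" using P \<epsilon>(1) by simp
    then have t0: "t \<ge> 0" using tpos by linarith
    have "norm y = t * norm q" using t0 by (simp add: y_def)
    also have "\<dots> \<ge> (P^2 / (12 * P * \<epsilon>)) * P" using tpos normq t0 P \<epsilon>
      by (intro mult_mono) auto
    finally have ny: "norm y \<ge> P^2 / (12 * \<epsilon>)" using P by (simp add: power2_eq_square)
    have "M + 1 \<le> P^2 / (12 * \<epsilon>)"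
      using \<epsilon>(3) \<epsilon>(1) M(1) by (simp add: le_divide_eq field_simps)
    then have ybig: "norm y > M" using ny by simp
    have yu: "y \<in> cone_N \<gamma> u"
      unfolding Nu using cu(1,2,3) t0
      by (intro CollectI exI[of _ "t / c"] exI[of _ "c *\<^sub>R q"]) (simp add: y_def)
    have yv: "y - b \<in> cone_N \<gamma> v"
    proof -
      have "y - b = s *\<^sub>R q'" using bts by (simp add: y_def)
      then show ?thesis unfolding Nv using cv(1,2,3) spos
        by (intro CollectI exI[of _ "s / c'"] exI[of _ "c' *\<^sub>R q'"]) simp
    qed
    have yC: "y \<in> C" unfolding Ceq using yu yv by (auto intro!: image_eqI[of y _ "y - b"])
    have dpi: "\<forall>s\<in>{0, b}. dual_gauge \<gamma> (\<pi> s) \<le> 1" using du dv by (simp add: \<pi>_def)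
    have "y \<in> elementary_hull \<gamma> {0, b}"
      unfolding elementary_hull_def using dpi yC Cbounded
      by (auto simp: C_def)
    then show False using M(2) ybig by fastforce
  qed
qed

end



theorem mainTheorem16:
  fixes \<gamma> :: "real^2 \<Rightarrow> real"
  assumes "is_gauge \<gamma>" and "\<not> polyhedral_gauge \<gamma>"
  shows "\<exists>a b :: real^2. \<not> bounded (elementary_hull \<gamma> {a, b})"
proof -
  obtain B :: "(real^2) set" where B: "convex B" "compact B" "0 \<in> interior B"
    and g: "\<gamma> = minkowski_functional B"
    using assms(1) unfolding is_gauge_def by blast
  have gb: "gauge_ball \<gamma> = B" using gauge_ball_eq[OF B] g by simp
  have np: "\<not> polytope B" using assms(2) gb unfolding polyhedral_gauge_def by simp
  obtain b where "\<not> bounded (elementary_hull \<gamma> {0, b})"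
    using main_unbounded[OF B gb np] by blast
  then show ?thesis by blast
qed

end
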